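(* For $n>1/2$ and $x\ge 0$ the following holds: \begin{equation*} \frac{2}{x+\sqrt{4n+2+x^2}}<\frac{U(n,x)}{U (n-1,x)}<\frac{2}{x+\sqrt{4n-2+x^2}} . \end{equation*} The lower bound also holds if $n\in (-1/2,1/2)$, and it turns into an equality if $n=-1/2$.
   Context: $U(a,x)$ denotes the standard parabolic cylinder function (as in the NIST Digital Library of Mathematical Functions, Chapter 12), i.e. the solution of $y''(x)-(x^2/4+a)y(x)=0$ that is recessive (decays) as $x\rightarrow+\infty$. The parameter $n$ is real. *)

theory Defs
  imports "HOL-Analysis.Analysis"
begin

text \<open>Parabolic cylinder function U(a,x) (DLMF 12.2, 12.9.1): the unique solution of
  y'' = (x^2/4 + a) y on the real line with y(x) ~ x^(-a-1/2) exp(-x^2/4) as x tends to +infinity.\<close>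

definition pcf_U :: "real \<Rightarrow> real \<Rightarrow> real" where
  "pcf_U a = (THE f. (\<exists>f'. \<forall>x. (f has_real_derivative f' x) (at x) \<and>
                          (f' has_real_derivative (x^2/4 + a) * f x) (at x)) \<and>
                ((\<lambda>x. f x / (x powr (-a - 1/2) * exp (-(x^2)/4))) \<longlongrightarrow> 1) at_top)"

end

theory Submission
  imports Defs "HOL-Real_Asymp.Real_Asymp"
begin


definition gI :: "real \<Rightarrow> real \<Rightarrow> real \<Rightarrow> real" where
  "gI k x t = t powr (k-1) * exp (-(t^2)/2 - x*t)"

definition VI :: "real \<Rightarrow> real \<Rightarrow> real" where
  "VI k x = (LINT t:{0<..}|lborel. gI k x t)"

lemma gI_meas[measurable]: "gI k x \<in> borel_measurable borel"
  unfolding gI_def by measurable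

lemma int_gamma:
  fixes k :: real
  assumes "k > 0"
  shows "set_integrable lborel {0<..} (\<lambda>t. t powr (k-1) * exp (-t))"
proof -
  have eq: "(\<lambda>t. indicator {0<..} t *\<^sub>R (t powr (k-1) * exp (-t))) =
     (\<lambda>t::real. (indicator {0..} t::real) * t powr (k - 1) / exp t)"
    by (auto simp: fun_eq_iff indicator_def exp_minus field_simps)
  show ?thesis unfolding set_integrable_def eq
    apply (rule integrableI_nn_integral_finite[where x="Gamma k"])
      apply measurable
     apply (auto simp: indicator_def)[1]
    using Gamma_conv_nn_integral_real[OF assms] by (simp add: indicator_def)
qed

lemma int_gI:
  assumes "k > 0"
  shows "set_integrable lborel {0<..} (gI k x)"
proof -
  define K where "K = exp ((1-x)^2/2)"
  have "set_integrable lborel {0<..} (\<lambda>t. K * (t powr (k-1) * exp (-t)))"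
    by (intro set_integrable_mult_right int_gamma assms)
  then show ?thesis
    unfolding set_integrable_def
  proof (rule Bochner_Integration.integrable_bound)
    show "(\<lambda>t. indicator {0<..} t *\<^sub>R gI k x t) \<in> borel_measurable lborel" by measurable
    show "AE t in lborel. norm (indicator {0<..} t *\<^sub>R gI k x t) \<le> norm (indicator {0<..} t *\<^sub>R (K * (t powr (k - 1) * exp (- t))))"
    proof (rule AE_I2)
      fix t :: real
      have "-(t^2)/2 - x*t \<le> (1-x)^2/2 + (-t)"
        using sum_squares_ge_zero[of "t - (1-x)" 0] by (simp add: power2_eq_square algebra_simps)
      hence "exp (-(t^2)/2 - x*t) \<le> K * exp (-t)"
        by (simp add: K_def exp_add[symmetric])
      then have "t powr (k-1) * exp (-(t^2)/2 - x*t) \<le> t powr (k-1) * (K * exp (-t))"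
        by (intro mult_left_mono) auto
      then show "norm (indicator {0<..} t *\<^sub>R gI k x t) \<le> norm (indicator {0<..} t *\<^sub>R (K * (t powr (k - 1) * exp (- t))))"
        by (auto simp: indicator_def gI_def K_def mult_ac)
    qed
  qed
qed



lemma lim_top: fixes k x :: real assumes "k > 0"
  shows "((\<lambda>t. t powr k * exp (-(t^2)/2 - x*t)) \<longlongrightarrow> 0) at_top"
  using assms by real_asymp

lemma lim_zero: fixes k x :: real assumes "k > 0"
  shows "((\<lambda>t. t powr k * exp (-(t^2)/2 - x*t)) \<longlongrightarrow> 0) (at_right 0)"
  using assms by real_asymp

lemma VI_ibp:
  fixes k x :: real
  assumes k: "k > 0"
  shows "VI (k+2) x + x * VI (k+1) x = k * VI k x"
proof -
  define F where "F = (\<lambda>t::real. t powr k * exp (-(t^2)/2 - x*t))"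
  define f where "f = (\<lambda>t. k * gI k x t - (gI (k+2) x t + x * gI (k+1) x t))"
  have i0: "set_integrable lborel {0<..} (gI k x)" using int_gI k by simp
  have i1: "set_integrable lborel {0<..} (gI (k+1) x)" using int_gI k by simp
  have i2: "set_integrable lborel {0<..} (gI (k+2) x)" using int_gI k by simp
  have fi: "set_integrable lborel {0<..} f"
    unfolding f_def
    by (intro set_integral_diff(1) set_integral_add(1) set_integrable_mult_right i0 i1 i2)
  have "(LBINT t=ereal 0..\<infinity>. f t) = 0 - 0"
  proof (rule interval_integral_FTC_integrable)
    show "ereal 0 < \<infinity>" by simp
    fix t assume t: "ereal 0 < ereal t" "ereal t < \<infinity>"
    hence t0: "t > 0" by simp
    have "(F has_real_derivative (k * t powr (k-1) * exp (-(t^2)/2 - x*t) + t powr k * (exp (-(t^2)/2 - x*t) * (-(2*t)/2 - x)))) (at t)"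
      unfolding F_def using t0
      by (auto intro!: derivative_eq_intros simp: power2_eq_square)
    moreover have "k * t powr (k-1) * exp (-(t^2)/2 - x*t) + t powr k * (exp (-(t^2)/2 - x*t) * (-(2*t)/2 - x)) = f t"
      using t0 by (simp add: f_def gI_def powr_add algebra_simps)
    ultimately show "(F has_vector_derivative f t) (at t)"
      by (simp add: has_real_derivative_iff_has_vector_derivative)
    show "isCont f t" unfolding f_def gI_def using t0
      by (auto intro!: continuous_intros)
  next
    show "set_integrable lborel (einterval (ereal 0) \<infinity>) f" using fi by (simp add: einterval_def greaterThan_def)
    show "((F \<circ> real_of_ereal) \<longlongrightarrow> 0) (at_right (ereal 0))"
      unfolding ereal_tendsto_simps F_def using lim_zero[OF k] .
    show "((F \<circ> real_of_ereal) \<longlongrightarrow> 0) (at_left \<infinity>)"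
      unfolding ereal_tendsto_simps F_def using lim_top[OF k] .
  qed
  hence "(LINT t:{0<..}|lborel. f t) = 0"
    using interval_lebesgue_integral_0_infty(2)[of lborel f] by (simp add: zero_ereal_def)
  moreover have "(LINT t:{0<..}|lborel. f t) = k * VI k x - (VI (k+2) x + x * VI (k+1) x)"
    unfolding f_def VI_def
    using i0 i1 i2 by (simp add: set_integral_diff(2) set_integral_add(2) set_integral_add(1) set_integrable_mult_right)
  ultimately show ?thesis by simp
qed



lemma exp_sub_one_bound: "\<bar>exp y - 1\<bar> \<le> \<bar>y\<bar> * exp \<bar>y\<bar>" for y :: real
proof (cases "y \<ge> 0")
  case True
  have "exp (-y) \<ge> 1 - y" using exp_ge_add_one_self[of "-y"] by simp
  hence "exp (-y) * exp y \<ge> (1 - y) * exp y" by (intro mult_right_mono) auto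
  hence "1 \<ge> (1 - y) * exp y" by (simp add: exp_minus)
  thus ?thesis using True by (simp add: algebra_simps)
next
  case False
  have "exp y \<ge> 1 + y" using exp_ge_add_one_self[of y] by simp
  moreover have "exp y \<le> 1" using False by simp
  moreover have "1 \<le> exp \<bar>y\<bar>" by simp
  ultimately show ?thesis using False
    by (smt (verit) mult_le_cancel_left1)
qed

lemma powr_m1: "t > 0 \<Longrightarrow> t * t powr (k-1) = t powr k" for t k :: real
proof -
  assume "t > 0"
  have "t powr k = t powr ((k-1) + 1)" by simp
  also have "\<dots> = t powr (k-1) * t powr 1" by (rule powr_add)
  also have "\<dots> = t powr (k-1) * t" using \<open>t > 0\<close> by simp
  finally show ?thesis by simp
qed

lemma powr_p1: "t > 0 \<Longrightarrow> t * t powr k = t powr (k+1)" for t k :: real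
  using powr_m1[of t "k+1"] by simp

lemma gI_shift: "gI k (x+h) t = gI k x t * exp (-(h*t))"
proof -
  have "-(t^2)/2 - (x+h)*t = (-(t^2)/2 - x*t) + (-(h*t))" by (simp add: algebra_simps)
  hence "exp (-(t^2)/2 - (x+h)*t) = exp (-(t^2)/2 - x*t) * exp (-(h*t))"
    by (subst exp_add[symmetric]) simp
  thus ?thesis unfolding gI_def by simp
qed

lemma gI_nonneg: "gI k x t \<ge> 0"
  unfolding gI_def by simp

lemma gI_succ: "t > 0 \<Longrightarrow> gI (k+1) x t = t * gI k x t"
  unfolding gI_def using powr_m1[of t k] by simp

lemma VI_deriv:
  fixes k x :: real
  assumes k: "k > 0"
  shows "(VI k has_real_derivative - VI (k+1) x) (at x)"
  unfolding DERIV_def tendsto_at_iff_sequentially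
proof (intro allI impI)
  fix X :: "nat \<Rightarrow> real"
  assume X0: "\<forall>i. X i \<in> UNIV - {0}" and XL: "X \<longlonglongrightarrow> 0"
  obtain B where B: "B > 0" "\<And>i. norm (X i) \<le> B"
  proof -
    have "Bseq X" using convergent_imp_Bseq[of X] XL by (auto simp: convergent_def)
    then show ?thesis using that by (auto elim!: BseqE)
  qed
  define s where "s = (\<lambda>i t. indicator {0<..} t *\<^sub>R ((gI k (x + X i) t - gI k x t) / X i))"
  define f where "f = (\<lambda>t. indicator {0<..} t *\<^sub>R (- gI (k+1) x t))"
  define w where "w = (\<lambda>t. indicator {0<..} t *\<^sub>R gI (k+1) (x - B) t)"
  have eqs: "(VI k (x + X i) - VI k x) / X i = integral\<^sup>L lborel (s i)" for i
  proof -
    have "(VI k (x + X i) - VI k x) / X i = (LINT t:{0<..}|lborel. (gI k (x + X i) t - gI k x t)) / X i"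
      unfolding VI_def using int_gI[OF k] by (simp add: set_integral_diff(2))
    also have "\<dots> = (LINT t:{0<..}|lborel. (gI k (x + X i) t - gI k x t) / X i)"
      by (simp add: set_integral_divide_zero)
    finally show ?thesis unfolding s_def set_lebesgue_integral_def .
  qed
  have eqf: "- VI (k+1) x = integral\<^sup>L lborel f"
    unfolding f_def VI_def using set_integral_uminus[OF int_gI[of "k+1" x]] k
    by (simp add: set_lebesgue_integral_def)
  have "(\<lambda>i. integral\<^sup>L lborel (s i)) \<longlonglongrightarrow> integral\<^sup>L lborel f"
  proof (rule integral_dominated_convergence[where w=w])
    show "f \<in> borel_measurable lborel" unfolding f_def by measurable
    show "s i \<in> borel_measurable lborel" for i unfolding s_def by measurable
    show "integrable lborel w" unfolding w_def using int_gI[of "k+1" "x - B"] k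
      by (simp add: set_integrable_def)
    show "AE t in lborel. (\<lambda>i. s i t) \<longlonglongrightarrow> f t"
    proof (rule AE_I2)
      fix t :: real
      show "(\<lambda>i. s i t) \<longlonglongrightarrow> f t"
      proof (cases "t > 0")
        case False thus ?thesis by (simp add: s_def f_def)
      next
        case True
        have d: "((\<lambda>h. exp (-(h*t))) has_real_derivative - t) (at 0)"
          by (auto intro!: derivative_eq_intros)
        hence "((\<lambda>h. (exp (-((0+h)*t)) - exp (-(0*t))) / h) \<longlongrightarrow> - t) (at 0)"
          unfolding DERIV_def by simp
        hence "((\<lambda>h. (exp (-(h*t)) - 1) / h) \<circ> X) \<longlonglongrightarrow> - t"
          using X0 XL unfolding tendsto_at_iff_sequentially by simp
        hence "(\<lambda>i. gI k x t * ((exp (-(X i*t)) - 1) / X i)) \<longlonglongrightarrow> gI k x t * (- t)"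
          by (intro tendsto_mult tendsto_const) (simp add: o_def)
        moreover have "gI k x t * ((exp (-(X i*t)) - 1) / X i) = s i t" for i
          using True unfolding s_def by (simp add: gI_shift algebra_simps)
        moreover have "gI k x t * (- t) = f t"
          using True unfolding f_def gI_def by (simp add: powr_m1 algebra_simps)
        ultimately show ?thesis by simp
      qed
    qed
    show "AE t in lborel. norm (s i t) \<le> w t" for i
    proof (rule AE_I2)
      fix t :: real
      show "norm (s i t) \<le> w t"
      proof (cases "t > 0")
        case False thus ?thesis by (simp add: s_def w_def)
      next
        case True
        have Xi: "X i \<noteq> 0" using X0 by auto
        have e1: "\<bar>exp (-(X i*t)) - 1\<bar> \<le> \<bar>X i\<bar> * t * exp (B * t)"
        proof -
          have "\<bar>exp (-(X i*t)) - 1\<bar> \<le> \<bar>-(X i*t)\<bar> * exp \<bar>-(X i*t)\<bar>" by (rule exp_sub_one_bound)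
          also have "\<dots> \<le> \<bar>X i\<bar> * t * exp (B * t)"
            using True B(2)[of i] by (intro mult_mono) (auto simp: abs_mult mult_right_mono)
          finally show ?thesis .
        qed
        have "norm (s i t) = gI k x t * (\<bar>exp (-(X i*t)) - 1\<bar> / \<bar>X i\<bar>)"
        proof -
          have "gI k x t * exp (- (X i * t)) - gI k x t = gI k x t * (exp (- (X i * t)) - 1)"
            by (simp add: right_diff_distrib)
          hence "\<bar>gI k (x + X i) t - gI k x t\<bar> = gI k x t * \<bar>exp (- (X i * t)) - 1\<bar>"
            using gI_shift[of k x "X i" t] gI_nonneg[of k x t] by (simp add: abs_mult)
          thus ?thesis using True unfolding s_def
            by (simp add: abs_divide)
        qed
        also have "\<dots> \<le> gI k x t * (t * exp (B * t))"
          using Xi True e1 by (intro mult_left_mono) (simp_all add: gI_nonneg pos_divide_le_eq mult.commute mult.left_commute)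
        also have "\<dots> = w t"
          using True unfolding w_def using gI_shift[of k x "-B" t] gI_succ[OF True, of k "x - B"] by (simp add: mult_ac)
        finally show ?thesis .
      qed
    qed
  qed
  thus "((\<lambda>h. (VI k (x + h) - VI k x) / h) \<circ> X) \<longlonglongrightarrow> - VI (k + 1) x"
    using eqs eqf by (simp add: o_def)
qed



lemma set_integral_pos_Ioi:
  fixes h :: "real \<Rightarrow> real"
  assumes int: "set_integrable lborel {0<..} h"
    and nn: "\<And>t. t > 0 \<Longrightarrow> h t \<ge> 0"
    and pos: "\<And>t. t > 0 \<Longrightarrow> t \<noteq> p \<Longrightarrow> h t > 0"
  shows "(LINT t:{0<..}|lborel. h t) > 0"
proof -
  define F where "F = (\<lambda>t. indicator {0<..} t *\<^sub>R h t)"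
  have iF: "integrable lborel F" using int unfolding F_def set_integrable_def .
  have nF: "AE t in lborel. 0 \<le> F t" by (rule AE_I2) (auto simp: F_def indicator_def nn)
  have ge: "0 \<le> integral\<^sup>L lborel F" using nF by (rule integral_nonneg_AE)
  have "integral\<^sup>L lborel F \<noteq> 0"
  proof
    assume "integral\<^sup>L lborel F = 0"
    hence "AE t in lborel. F t = 0" using integral_nonneg_eq_0_iff_AE[OF iF nF] by simp
    hence A: "AE t in lborel. F t = 0" .
    have "AE t in lborel. (t::real) \<notin> {0<..<1}"
      using A AE_lborel_singleton[of p]
      apply eventually_elim
      using pos by (fastforce simp: F_def indicator_def)
    hence "emeasure lborel {0<..<(1::real)} = 0"
      by (subst (asm) AE_iff_measurable[of "{0<..<1}"]) auto
    thus False by simp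
  qed
  with ge show ?thesis unfolding set_lebesgue_integral_def F_def by simp
qed

lemma VI_pos: "k > 0 \<Longrightarrow> VI k x > 0"
  unfolding VI_def
  by (rule set_integral_pos_Ioi[where p=0, OF int_gI]) (auto simp: gI_def)

lemma VI_CS:
  assumes k: "k > 0"
  shows "(VI (k+1) x)^2 < VI k x * VI (k+2) x"
proof -
  define V0 V1 V2 where "V0 = VI k x" and "V1 = VI (k+1) x" and "V2 = VI (k+2) x"
  have p2: "V2 > 0" unfolding V2_def using VI_pos k by simp
  define l where "l = V1 / V2"
  have i0: "set_integrable lborel {0<..} (gI k x)" using int_gI k by simp
  have i1: "set_integrable lborel {0<..} (gI (k+1) x)" using int_gI k by simp
  have i2: "set_integrable lborel {0<..} (gI (k+2) x)" using int_gI k by simp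
  define h where "h = (\<lambda>t. gI k x t - 2 * l * gI (k+1) x t + l^2 * gI (k+2) x t)"
  have hi: "set_integrable lborel {0<..} h"
    unfolding h_def by (intro set_integral_diff(1) set_integral_add(1) set_integrable_mult_right i0 i1 i2)
  have hform: "h t = gI k x t * (1 - l * t)^2" if "t > 0" for t
  proof -
    have "gI (k+2) x t = t * (t * gI k x t)"
      using gI_succ[OF that, of "k+1" x] gI_succ[OF that, of k x] by (simp add: add.assoc)
    thus ?thesis unfolding h_def using gI_succ[OF that, of k x]
      by (simp add: power2_eq_square algebra_simps)
  qed
  have "(LINT t:{0<..}|lborel. h t) > 0"
  proof (rule set_integral_pos_Ioi[OF hi, where p="1/l"])
    fix t :: real assume t: "t > 0"
    show "0 \<le> h t" using t by (simp add: hform gI_nonneg)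
    assume "t \<noteq> 1/l"
    have "1 - l * t \<noteq> 0"
    proof
      assume "1 - l * t = 0"
      hence lt: "l * t = 1" by simp
      hence l0: "l \<noteq> 0" by auto
      hence "t = 1/l" using lt by (simp add: eq_divide_eq mult.commute)
      thus False using \<open>t \<noteq> 1/l\<close> by simp
    qed
    moreover have "gI k x t > 0" using t by (simp add: gI_def)
    ultimately show "0 < h t" using t by (simp add: hform)
  qed
  moreover have "(LINT t:{0<..}|lborel. h t) = V0 - 2 * l * V1 + l^2 * V2"
    unfolding h_def V0_def V1_def V2_def VI_def using i0 i1 i2
    by (simp add: set_integral_diff(2) set_integral_add(2) set_integral_add(1) set_integral_diff(1) set_integrable_mult_right)
  ultimately have "0 < V0 - 2 * l * V1 + l^2 * V2" by simp
  also have "\<dots> = V0 - V1^2 / V2" using p2 unfolding l_def by (simp add: field_simps power2_eq_square)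
  finally have "V1^2 < V0 * V2" using p2 by (simp add: field_simps)
  thus ?thesis unfolding V0_def V1_def V2_def .
qed



definition CI :: "real \<Rightarrow> real" where
  "CI k = (LINT t:{0<..}|lborel. t powr (k-1) * exp (-t))"

lemma CI_pos: "k > 0 \<Longrightarrow> CI k > 0"
  unfolding CI_def
  by (rule set_integral_pos_Ioi[where p=0, OF int_gamma]) auto

lemma VI_scale:
  fixes k x :: real
  assumes x: "x > 0"
  shows "x powr k * VI k x = (LINT u:{0<..}|lborel. u powr (k-1) * exp (-u) * exp (-((u/x)^2)/2))"
proof -
  define F where "F = (\<lambda>t. indicator {0<..} t *\<^sub>R gI k x t)"
  have "VI k x = (\<integral>t. F t \<partial>lborel)" unfolding VI_def F_def set_lebesgue_integral_def ..
  also have "\<dots> = \<bar>1/x\<bar> *\<^sub>R (\<integral>u. F (0 + (1/x) * u) \<partial>lborel)"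
    by (rule lborel_integral_real_affine) (use x in simp)
  finally have 1: "VI k x = (1/x) * (\<integral>u. F (u/x) \<partial>lborel)" using x by simp
  have 2: "x powr k * (1/x) * F (u/x) = indicator {0<..} u *\<^sub>R (u powr (k-1) * exp (-u) * exp (-((u/x)^2)/2))" for u
  proof (cases "u > 0")
    case False thus ?thesis using x by (simp add: F_def indicator_def divide_less_0_iff field_simps)
  next
    case True
    have a: "(u/x) powr (k-1) = u powr (k-1) / x powr (k-1)" using True x by (simp add: powr_divide)
    have b: "x powr k * (1/x) = x powr (k-1)" using x powr_m1[of x k] by (simp add: field_simps)
    have c: "exp (-((u/x)^2)/2 - x * (u/x)) = exp (-u) * exp (-((u/x)^2)/2)"
    proof -
      have e1: "exp (-u) * exp (-((u/x)^2)/2) = exp (-u + -((u/x)^2)/2)" by (rule exp_add[symmetric])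
      have e2: "-((u/x)^2)/2 - x * (u/x) = -u + -((u/x)^2)/2" using x by simp
      show ?thesis unfolding e1 e2 ..
    qed
    have "x powr k * (1/x) * F (u/x) = x powr (k-1) * ((u/x) powr (k-1) * exp (-((u/x)^2)/2 - x * (u/x)))"
      using True x b by (simp add: F_def gI_def)
    also have "\<dots> = u powr (k-1) * exp (-u) * exp (-((u/x)^2)/2)"
      unfolding a c using x by simp
    finally show ?thesis using True by simp
  qed
  have "x powr k * VI k x = (\<integral>u. x powr k * (1/x) * F (u/x) \<partial>lborel)"
    by (simp add: 1)
  also have "\<dots> = (LINT u:{0<..}|lborel. u powr (k-1) * exp (-u) * exp (-((u/x)^2)/2))"
    unfolding 2 set_lebesgue_integral_def ..
  finally show ?thesis .
qed

lemma VI_asym: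
  fixes k :: real
  assumes k: "k > 0"
  shows "((\<lambda>x. x powr k * VI k x) \<longlongrightarrow> CI k) at_top"
proof -
  define s where "s = (\<lambda>x u. indicator {0<..} u *\<^sub>R (u powr (k-1) * exp (-u) * exp (-((u/x)^2)/2)))"
  define f where "f = (\<lambda>u::real. indicator {0<..} u *\<^sub>R (u powr (k-1) * exp (-u)))"
  have "((\<lambda>x. integral\<^sup>L lborel (s x)) \<longlongrightarrow> integral\<^sup>L lborel f) at_top"
  proof (rule integral_dominated_convergence_at_top[where w=f])
    show "f \<in> borel_measurable lborel" unfolding f_def by measurable
    show "s x \<in> borel_measurable lborel" for x unfolding s_def by measurable
    show "integrable lborel f" using int_gamma[OF k] unfolding f_def set_integrable_def .
    show "AE u in lborel. ((\<lambda>x. s x u) \<longlongrightarrow> f u) at_top"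
    proof (rule AE_I2)
      fix u :: real
      have "((\<lambda>x. exp (-((u/x)^2)/2)) \<longlongrightarrow> exp (-((0)^2)/2)) at_top"
        by (intro tendsto_intros tendsto_divide_0[OF tendsto_const] filterlim_at_top_imp_at_infinity filterlim_ident) simp
      hence "((\<lambda>x. indicator {0<..} u *\<^sub>R (u powr (k-1) * exp (-u) * exp (-((u/x)^2)/2))) \<longlongrightarrow>
              indicator {0<..} u *\<^sub>R (u powr (k-1) * exp (-u) * 1)) at_top"
        by (intro tendsto_intros) simp_all
      thus "((\<lambda>x. s x u) \<longlongrightarrow> f u) at_top" unfolding s_def f_def by simp
    qed
    show "\<forall>\<^sub>F x in at_top. AE u in lborel. norm (s x u) \<le> f u"
      by (intro always_eventually allI AE_I2) (auto simp: s_def f_def indicator_def)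
  qed
  moreover have "\<forall>\<^sub>F x in at_top. integral\<^sup>L lborel (s x) = x powr k * VI k x"
    using eventually_gt_at_top[of 0]
    by eventually_elim (simp add: VI_scale s_def set_lebesgue_integral_def)
  moreover have "integral\<^sup>L lborel f = CI k" unfolding f_def CI_def set_lebesgue_integral_def ..
  ultimately show ?thesis using Lim_transform_eventually by fastforce
qed



lemma ode_zero:
  fixes w w' :: "real \<Rightarrow> real" and a x0 y :: real
  assumes dw: "\<And>x. (w has_real_derivative w' x) (at x)"
    and dw': "\<And>x. (w' has_real_derivative (x^2/4 + a) * w x) (at x)"
    and z: "w x0 = 0" "w' x0 = 0"
  shows "w y = 0"
proof -
  define E where "E = (\<lambda>x. (w x)^2 + (w' x)^2)"
  define K where "K = \<bar>x0\<bar> + \<bar>y - x0\<bar>"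
  define M where "M = 1 + \<bar>a\<bar> + K^2/4"
  have Ederiv: "(E has_real_derivative 2 * w x * w' x * (1 + (x^2/4 + a))) (at x)" for x
  proof -
    have "(E has_real_derivative 2 * w x * w' x + 2 * w' x * ((x^2/4 + a) * w x)) (at x)"
      unfolding E_def by (auto intro!: derivative_eq_intros dw dw')
    thus ?thesis by (simp add: algebra_simps)
  qed
  have Enn: "E x \<ge> 0" for x unfolding E_def by simp
  have bound: "\<bar>2 * w x * w' x * (1 + (x^2/4 + a))\<bar> \<le> M * E x" if "\<bar>x\<bar> \<le> K" for x
  proof -
    have "2 * \<bar>w x * w' x\<bar> \<le> E x"
      using sum_squares_ge_zero[of "\<bar>w x\<bar> - \<bar>w' x\<bar>" 0] unfolding E_def
      by (simp add: power2_eq_square algebra_simps abs_mult)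
    moreover have "\<bar>1 + (x^2/4 + a)\<bar> \<le> M"
    proof -
      have "x^2 \<le> K^2" using that by (metis abs_ge_zero power2_abs power_mono)
      moreover have "0 \<le> x^2" by simp
      ultimately show ?thesis unfolding M_def abs_le_iff
        using abs_ge_self[of a] abs_ge_minus_self[of a] by (intro conjI; linarith)
    qed
    moreover have "M \<ge> 0" unfolding M_def by simp
    ultimately have "(2 * \<bar>w x * w' x\<bar>) * \<bar>1 + (x^2/4 + a)\<bar> \<le> E x * M"
      by (intro mult_mono) auto
    moreover have eq: "\<bar>2 * w x * w' x * c\<bar> = (2 * \<bar>w x * w' x\<bar>) * \<bar>c\<bar>" for c
      by (simp add: abs_mult)
    ultimately show ?thesis by (metis mult.commute)
  qed
  have "E y = 0"
  proof (cases "x0 \<le> y")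
    case True
    define G where "G = (\<lambda>x. E x * exp (- (M * x)))"
    have "G y \<le> G x0"
    proof (rule DERIV_nonpos_imp_nonincreasing[OF True])
      fix x assume x: "x0 \<le> x" "x \<le> y"
      have xK: "\<bar>x\<bar> \<le> K" using x unfolding K_def by linarith
      let ?D = "2 * w x * w' x * (1 + (x^2/4 + a))"
      have "(G has_real_derivative (?D * exp (- (M * x)) + E x * (exp (- (M * x)) * (- M)))) (at x)"
        unfolding G_def by (auto intro!: derivative_eq_intros Ederiv)
      moreover have "?D * exp (- (M * x)) + E x * (exp (- (M * x)) * (- M)) \<le> 0"
      proof -
        have "?D \<le> M * E x" using bound[OF xK] by linarith
        hence "(?D - M * E x) * exp (- (M * x)) \<le> 0" by (intro mult_nonpos_nonneg) auto
        thus ?thesis by (simp add: algebra_simps)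
      qed
      ultimately show "\<exists>d. (G has_real_derivative d) (at x) \<and> d \<le> 0" by blast
    qed
    hence "E y * exp (- (M * y)) \<le> 0" using z unfolding G_def E_def by simp
    hence "E y \<le> 0" by (simp add: mult_le_0_iff)
    thus ?thesis using Enn[of y] by simp
  next
    case False
    define G where "G = (\<lambda>x. E x * exp (M * x))"
    have "G y \<le> G x0"
    proof (rule DERIV_nonneg_imp_nondecreasing[of y x0 G])
      show "y \<le> x0" using False by simp
      fix x assume x: "y \<le> x" "x \<le> x0"
      have xK: "\<bar>x\<bar> \<le> K" using x unfolding K_def by linarith
      let ?D = "2 * w x * w' x * (1 + (x^2/4 + a))"
      have "(G has_real_derivative (?D * exp (M * x) + E x * (exp (M * x) * M))) (at x)"
        unfolding G_def by (auto intro!: derivative_eq_intros Ederiv)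
      moreover have "?D * exp (M * x) + E x * (exp (M * x) * M) \<ge> 0"
      proof -
        have "?D \<ge> - (M * E x)" using bound[OF xK] by linarith
        hence "(?D + M * E x) * exp (M * x) \<ge> 0" by (intro mult_nonneg_nonneg) auto
        thus ?thesis by (simp add: algebra_simps)
      qed
      ultimately show "\<exists>d. (G has_real_derivative d) (at x) \<and> d \<ge> 0" by blast
    qed
    hence "E y * exp (M * y) \<le> 0" using z unfolding G_def E_def by simp
    hence "E y \<le> 0" by (simp add: mult_le_0_iff)
    thus ?thesis using Enn[of y] by simp
  qed
  thus ?thesis unfolding E_def by (simp add: add_nonneg_eq_0_iff)
qed



definition isU :: "real \<Rightarrow> (real \<Rightarrow> real) \<Rightarrow> bool" where
  "isU a f \<longleftrightarrow> (\<exists>f'. \<forall>x. (f has_real_derivative f' x) (at x) \<and>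
                          (f' has_real_derivative (x^2/4 + a) * f x) (at x)) \<and>
                ((\<lambda>x. f x / (x powr (-a - 1/2) * exp (-(x^2)/4))) \<longlongrightarrow> 1) at_top"

lemma phi_lim: "((\<lambda>x::real. x powr (-a - 1/2) * exp (-(x^2)/4)) \<longlongrightarrow> 0) at_top"
  by real_asymp

lemma isU_unique:
  assumes F: "isU a f" and Gg: "isU a g"
  shows "f = g"
proof -
  define \<phi> where "\<phi> = (\<lambda>x::real. x powr (-a - 1/2) * exp (-(x^2)/4))"
  obtain f' where df: "\<And>x. (f has_real_derivative f' x) (at x)"
    and df': "\<And>x. (f' has_real_derivative (x^2/4 + a) * f x) (at x)"
    and lf: "((\<lambda>x. f x / \<phi> x) \<longlongrightarrow> 1) at_top"
    using F unfolding isU_def \<phi>_def by blast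
  obtain g' where dg: "\<And>x. (g has_real_derivative g' x) (at x)"
    and dg': "\<And>x. (g' has_real_derivative (x^2/4 + a) * g x) (at x)"
    and lg: "((\<lambda>x. g x / \<phi> x) \<longlongrightarrow> 1) at_top"
    using Gg unfolding isU_def \<phi>_def by blast
  have phipos: "x > 0 \<Longrightarrow> \<phi> x > 0" for x unfolding \<phi>_def by simp
  have ev0: "\<forall>\<^sub>F x in at_top. (x::real) > 0" by (rule eventually_gt_at_top)
  have f0: "(f \<longlongrightarrow> 0) at_top"
  proof -
    have "((\<lambda>x. f x / \<phi> x * \<phi> x) \<longlongrightarrow> 1 * 0) at_top"
      by (intro tendsto_mult lf) (use phi_lim[of a] in \<open>simp add: \<phi>_def\<close>)
    moreover have "\<forall>\<^sub>F x in at_top. f x / \<phi> x * \<phi> x = f x"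
      using ev0 by eventually_elim (simp add: phipos less_imp_neq[symmetric])
    ultimately show ?thesis by (simp add: tendsto_cong)
  qed
  have fpos: "\<forall>\<^sub>F x in at_top. f x > 0"
  proof -
    have "\<forall>\<^sub>F x in at_top. f x / \<phi> x > 1/2" using lf by (rule order_tendstoD) simp
    with ev0 show ?thesis
    proof eventually_elim
      case (elim x)
      hence "f x / \<phi> x > 0" "\<phi> x > 0" using phipos[of x] by auto
      thus ?case by (simp add: zero_less_divide_iff)
    qed
  qed
  define w where "w = (\<lambda>x. f x - g x)"
  define w' where "w' = (\<lambda>x. f' x - g' x)"
  have dw: "(w has_real_derivative w' x) (at x)" for x
    unfolding w_def w'_def by (intro derivative_intros df dg)
  have dw': "(w' has_real_derivative (x^2/4 + a) * w x) (at x)" for x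
  proof -
    have "(w' has_real_derivative (x^2/4 + a) * f x - (x^2/4 + a) * g x) (at x)"
      unfolding w'_def by (intro derivative_intros df' dg')
    thus ?thesis by (rule DERIV_cong) (simp add: w_def field_simps)
  qed
  define q where "q = (\<lambda>x. w x / f x)"
  have q0: "(q \<longlongrightarrow> 0) at_top"
  proof -
    have "((\<lambda>x. 1 - (g x / \<phi> x) / (f x / \<phi> x)) \<longlongrightarrow> 1 - 1 / 1) at_top"
      by (intro tendsto_intros lf lg) simp
    moreover have "\<forall>\<^sub>F x in at_top. 1 - (g x / \<phi> x) / (f x / \<phi> x) = q x"
      using ev0 fpos by eventually_elim (simp add: q_def w_def phipos field_simps less_imp_neq[symmetric])
    ultimately show ?thesis by (simp add: tendsto_cong)
  qed
  define Wr where "Wr = (\<lambda>x. f x * w' x - f' x * w x)"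
  have "(Wr has_real_derivative 0) (at x)" for x
  proof -
    have "(Wr has_real_derivative (f' x * w' x + (x^2/4 + a) * w x * f x) - ((x^2/4 + a) * f x * w x + w' x * f' x)) (at x)"
      unfolding Wr_def by (intro DERIV_diff DERIV_mult df df' dw dw')
    thus ?thesis by (simp add: algebra_simps)
  qed
  hence Wc: "Wr x = Wr 0" for x by (intro DERIV_isconst_all) auto
  define W0 where "W0 = Wr 0"
  have dq: "(q has_real_derivative W0 / (f x)^2) (at x)" if "f x > 0" for x
  proof -
    have "(q has_real_derivative (w' x * f x - w x * f' x) / (f x * f x)) (at x)"
      unfolding q_def by (rule DERIV_divide[OF dw df]) (use that in simp)
    moreover have "w' x * f x - w x * f' x = W0" using Wc[of x] unfolding W0_def Wr_def by (simp add: algebra_simps)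
    ultimately show ?thesis by (simp add: power2_eq_square)
  qed
  have fsq: "\<forall>\<^sub>F x in at_top. W0 \<noteq> 0 \<longrightarrow> (f x)^2 < \<bar>W0\<bar>"
  proof (cases "W0 = 0")
    case False
    have "((\<lambda>x. (f x)^2) \<longlongrightarrow> 0^2) at_top" by (intro tendsto_intros f0)
    hence "\<forall>\<^sub>F x in at_top. (f x)^2 < \<bar>W0\<bar>" by (rule order_tendstoD(2)) (use False in simp)
    thus ?thesis by eventually_elim auto
  qed simp
  have qs: "\<forall>\<^sub>F x in at_top. \<bar>q x\<bar> < 1/2"
  proof -
    have "((\<lambda>x. \<bar>q x\<bar>) \<longlongrightarrow> \<bar>0\<bar>) at_top" by (intro tendsto_intros q0)
    thus ?thesis by (rule order_tendstoD(2)) simp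
  qed
  from eventually_conj[OF ev0 eventually_conj[OF fpos eventually_conj[OF fsq qs]]]
  obtain N where N: "\<And>x. x \<ge> N \<Longrightarrow> x > 0 \<and> f x > 0 \<and> (W0 \<noteq> 0 \<longrightarrow> (f x)^2 < \<bar>W0\<bar>) \<and> \<bar>q x\<bar> < 1/2"
    unfolding eventually_at_top_linorder by blast
  have "W0 = 0"
  proof (rule ccontr)
    assume W: "W0 \<noteq> 0"
    have dd: "(q has_real_derivative W0 / (f x)^2) (at x)" if "N \<le> x" "x \<le> N + 1" for x
      using dq N that by blast
    obtain z where z: "N < z" "z < N + 1" "q (N+1) - q N = (N + 1 - N) * (W0 / (f z)^2)"
      using MVT2[of N "N+1" q "\<lambda>x. W0 / (f x)^2", OF _ dd] by auto
    have fz: "f z > 0" "(f z)^2 < \<bar>W0\<bar>" using N[of z] z W by auto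
    have "\<bar>W0 / (f z)^2\<bar> > 1" using fz by (simp add: abs_divide)
    moreover have "\<bar>q (N+1) - q N\<bar> < 1" using N[of N] N[of "N+1"] by auto
    ultimately show False using z(3) by simp
  qed
  have qc: "q x = q N" if "x \<ge> N" for x
  proof (cases "x = N")
    case False
    hence "N < x" using that by simp
    have dd: "(q has_real_derivative W0 / (f y)^2) (at y)" if "N \<le> y" "y \<le> x" for y
      using dq N that by blast
    obtain z where z: "N < z" "z < x" "q x - q N = (x - N) * (W0 / (f z)^2)"
      using MVT2[of N x q "\<lambda>x. W0 / (f x)^2", OF \<open>N < x\<close> dd] by auto
    thus ?thesis using \<open>W0 = 0\<close> by simp
  qed simp
  have "(q \<longlongrightarrow> q N) at_top"
  proof -
    have "\<forall>\<^sub>F x in at_top. q x = q N" using eventually_ge_at_top[of N] by (rule eventually_mono) (rule qc)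
    thus ?thesis by (rule tendsto_eventually)
  qed
  hence qN0: "q N = 0" using q0 by (rule tendsto_unique[rotated]) simp
  have wz: "w x = 0" if "x \<ge> N" for x
  proof -
    have "q x = 0" using qc[OF that] qN0 by simp
    thus ?thesis using N[OF that] unfolding q_def by simp
  qed
  have "((\<lambda>_. 0) has_real_derivative w' (N+1)) (at (N+1))"
  proof -
    have "\<forall>\<^sub>F x in nhds (N+1). w x = 0"
    proof -
      have "\<forall>\<^sub>F x in nhds (N+1). x \<in> {N<..}" by (rule eventually_nhds_in_open) auto
      thus ?thesis by (rule eventually_mono) (simp add: wz)
    qed
    thus ?thesis using dw[of "N+1"] DERIV_cong_ev[of "N+1" "N+1" w "\<lambda>_. 0" "w' (N+1)" "w' (N+1)"] by simp
  qed
  hence w'z: "w' (N+1) = 0" by (rule DERIV_unique[OF _ DERIV_const])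
  have "w y = 0" for y
    by (rule ode_zero[OF dw dw' _ w'z]) (rule wz, simp)
  thus ?thesis unfolding w_def by (auto simp: fun_eq_iff)
qed

lemma pcf_U_isU: assumes "isU a f" shows "pcf_U a = f"
proof -
  have "pcf_U a = (THE f. isU a f)" unfolding pcf_U_def isU_def ..
  also have "\<dots> = f"
  proof (rule the_equality)
    show "isU a f" by (rule assms)
    fix g assume "isU a g"
    thus "g = f" using isU_unique[OF assms] by simp
  qed
  finally show ?thesis .
qed



lemma expD:
  fixes h h' :: "real \<Rightarrow> real"
  assumes "(h has_real_derivative h' x) (at x)"
  shows "((\<lambda>x. exp (-(x^2)/4) * h x / C) has_real_derivative
          exp (-(x^2)/4) * (h' x - x/2 * h x) / C) (at x)"
proof -
  have e: "((\<lambda>x. exp (-(x^2)/4)) has_real_derivative exp (-(x^2)/4) * (-(x/2))) (at x)"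
    by (auto intro!: derivative_eq_intros simp: field_simps)
  have "((\<lambda>x. exp (-(x^2)/4) * h x / C) has_real_derivative
         (exp (-(x^2)/4) * (-(x/2)) * h x + h' x * exp (-(x^2)/4)) / C) (at x)"
    by (intro DERIV_cdivide DERIV_mult e assms)
  thus ?thesis by (rule DERIV_cong) (simp add: algebra_simps)
qed

lemma isU_A:
  fixes k :: real
  assumes k: "k > 0"
  shows "isU (k - 1/2) (\<lambda>x. exp (-(x^2)/4) * VI k x / CI k)"
proof -
  define C where "C = CI k"
  have C: "C > 0" unfolding C_def using CI_pos k by simp
  define f' where "f' = (\<lambda>x. exp (-(x^2)/4) * (- VI (k+1) x - x/2 * VI k x) / C)"
  have d1: "((\<lambda>x. exp (-(x^2)/4) * VI k x / C) has_real_derivative f' x) (at x)" for x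
    unfolding f'_def by (rule expD[of "VI k" "\<lambda>x. - VI (k+1) x", OF VI_deriv[OF k]])
  have d2: "(f' has_real_derivative (x^2/4 + (k - 1/2)) * (exp (-(x^2)/4) * VI k x / C)) (at x)" for x
  proof -
    have dh: "((\<lambda>x. - VI (k+1) x - x/2 * VI k x) has_real_derivative
               (- (- VI (k+1+1) x)) - (1/2 * VI k x + (- VI (k+1) x) * (x/2))) (at x)"
      using k by (intro DERIV_diff DERIV_minus DERIV_mult VI_deriv) (auto intro!: derivative_eq_intros)
    have D: "(f' has_real_derivative exp (-(x^2)/4) * (((- (- VI (k+1+1) x)) - (1/2 * VI k x + (- VI (k+1) x) * (x/2))) - x/2 * (- VI (k+1) x - x/2 * VI k x)) / C) (at x)"
      unfolding f'_def by (rule expD[of _ "\<lambda>x. (- (- VI (k+1+1) x)) - (1/2 * VI k x + (- VI (k+1) x) * (x/2))", OF dh])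
    have E: "VI (k+1+1) x = k * VI k x - x * VI (k+1) x"
      using VI_ibp[OF k, of x] by (simp add: add.assoc)
    show ?thesis
      by (rule DERIV_cong[OF D[unfolded E]]) (use C in \<open>simp add: field_simps power2_eq_square\<close>)
  qed
  have lim: "((\<lambda>x. exp (-(x^2)/4) * VI k x / C / (x powr (-(k - 1/2) - 1/2) * exp (-(x^2)/4))) \<longlongrightarrow> 1) at_top"
  proof -
    have "((\<lambda>x. x powr k * VI k x / C) \<longlongrightarrow> CI k / C) at_top"
      by (intro tendsto_divide VI_asym k tendsto_const) (use C in simp)
    moreover have "\<forall>\<^sub>F x in at_top. x powr k * VI k x / C = exp (-(x^2)/4) * VI k x / C / (x powr (-(k - 1/2) - 1/2) * exp (-(x^2)/4))"
      using eventually_gt_at_top[of 0]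
      by eventually_elim (simp add: powr_minus field_simps)
    ultimately show ?thesis using C by (simp add: C_def tendsto_cong)
  qed
  show ?thesis unfolding isU_def C_def[symmetric]
    using d1 d2 lim by blast
qed

lemma isU_B:
  fixes k :: real
  assumes k: "k > 0"
  shows "isU (k - 3/2) (\<lambda>x. exp (-(x^2)/4) * (x * VI k x + VI (k+1) x) / CI k)"
proof -
  define C where "C = CI k"
  have C: "C > 0" unfolding C_def using CI_pos k by simp
  have E: "VI (k+1+1) x = k * VI k x - x * VI (k+1) x" for x
    using VI_ibp[OF k, of x] by (simp add: add.assoc)
  have dF: "((\<lambda>x. x * VI k x + VI (k+1) x) has_real_derivative
             (1 * VI k x + (- VI (k+1) x) * x) + (- VI (k+1+1) x)) (at x)" for x
    using k by (intro DERIV_add DERIV_mult DERIV_ident VI_deriv) auto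
  define f' where "f' = (\<lambda>x. exp (-(x^2)/4) * ((1 - k) * VI k x - x/2 * (x * VI k x + VI (k+1) x)) / C)"
  have d1: "((\<lambda>x. exp (-(x^2)/4) * (x * VI k x + VI (k+1) x) / C) has_real_derivative f' x) (at x)" for x
  proof -
    have D: "((\<lambda>x. exp (-(x^2)/4) * (x * VI k x + VI (k+1) x) / C) has_real_derivative
       exp (-(x^2)/4) * (((1 * VI k x + (- VI (k+1) x) * x) + (- VI (k+1+1) x)) - x/2 * (x * VI k x + VI (k+1) x)) / C) (at x)"
      by (rule expD[of _ "\<lambda>x. (1 * VI k x + (- VI (k+1) x) * x) + (- VI (k+1+1) x)", OF dF])
    show ?thesis
      by (rule DERIV_cong[OF D[unfolded E]]) (simp add: f'_def algebra_simps)
  qed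
  have d2: "(f' has_real_derivative (x^2/4 + (k - 3/2)) * (exp (-(x^2)/4) * (x * VI k x + VI (k+1) x) / C)) (at x)" for x
  proof -
    have dh: "((\<lambda>x. (1 - k) * VI k x - x/2 * (x * VI k x + VI (k+1) x)) has_real_derivative
               (1 - k) * (- VI (k+1) x) - (1/2 * (x * VI k x + VI (k+1) x) + ((1 * VI k x + (- VI (k+1) x) * x) + (- VI (k+1+1) x)) * (x/2))) (at x)"
      using k by (intro DERIV_diff DERIV_cmult DERIV_mult VI_deriv dF) (auto intro!: derivative_eq_intros)
    have D: "(f' has_real_derivative exp (-(x^2)/4) * (((1 - k) * (- VI (k+1) x) - (1/2 * (x * VI k x + VI (k+1) x) + ((1 * VI k x + (- VI (k+1) x) * x) + (- VI (k+1+1) x)) * (x/2))) - x/2 * ((1 - k) * VI k x - x/2 * (x * VI k x + VI (k+1) x))) / C) (at x)"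
      unfolding f'_def by (rule expD[of _ "\<lambda>x. (1 - k) * (- VI (k+1) x) - (1/2 * (x * VI k x + VI (k+1) x) + ((1 * VI k x + (- VI (k+1) x) * x) + (- VI (k+1+1) x)) * (x/2))", OF dh])
    show ?thesis
      by (rule DERIV_cong[OF D[unfolded E]]) (use C in \<open>simp add: field_simps power2_eq_square\<close>)
  qed
  have lim: "((\<lambda>x. exp (-(x^2)/4) * (x * VI k x + VI (k+1) x) / C / (x powr (-(k - 3/2) - 1/2) * exp (-(x^2)/4))) \<longlongrightarrow> 1) at_top"
  proof -
    have inv2: "((\<lambda>x::real. 1 / x^2) \<longlongrightarrow> 0) at_top" by real_asymp
    have "((\<lambda>x. (x powr k * VI k x + x powr (k+1) * VI (k+1) x * (1 / x^2)) / C) \<longlongrightarrow> (CI k + CI (k+1) * 0) / C) at_top"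
      by (intro tendsto_divide tendsto_add tendsto_mult VI_asym inv2 tendsto_const) (use C k in simp_all)
    moreover have "\<forall>\<^sub>F x in at_top. (x powr k * VI k x + x powr (k+1) * VI (k+1) x * (1 / x^2)) / C = exp (-(x^2)/4) * (x * VI k x + VI (k+1) x) / C / (x powr (-(k - 3/2) - 1/2) * exp (-(x^2)/4))"
      using eventually_gt_at_top[of 0]
    proof eventually_elim
      case (elim x)
      have p1: "x powr (-(k - 3/2) - 1/2) = x / x powr k"
      proof -
        have "-(k - 3/2) - 1/2 = 1 - k" by simp
        hence "x powr (-(k - 3/2) - 1/2) = x powr 1 / x powr k" by (simp add: powr_diff)
        thus ?thesis using elim by simp
      qed
      have p2: "x powr (k+1) = x powr k * x" using elim by (simp add: powr_add)
      show ?case unfolding p1 p2 using elim C by (simp add: field_simps power2_eq_square)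
    qed
    ultimately show ?thesis using C by (simp add: C_def tendsto_cong)
  qed
  show ?thesis unfolding isU_def C_def[symmetric]
    using d1 d2 lim by blast
qed

lemma isU_m12: "isU (-1/2) (\<lambda>x. exp (-(x^2)/4))"
proof -
  have d1: "((\<lambda>x. exp (-(x^2)/4)) has_real_derivative exp (-(x^2)/4) * (-(x/2))) (at x)" for x :: real
    by (auto intro!: derivative_eq_intros simp: field_simps)
  have d2: "((\<lambda>x. exp (-(x^2)/4) * (-(x/2))) has_real_derivative (x^2/4 + -1/2) * exp (-(x^2)/4)) (at x)" for x :: real
    by (auto intro!: derivative_eq_intros simp: field_simps power2_eq_square)
  have lim: "((\<lambda>x::real. exp (-(x^2)/4) / (x powr (-(-1/2) - 1/2) * exp (-(x^2)/4))) \<longlongrightarrow> 1) at_top"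
  proof (rule tendsto_eventually)
    show "\<forall>\<^sub>F x in at_top. exp (-(x^2)/4) / (x powr (-(-1/2) - 1/2) * exp (-(x^2)/4)) = (1::real)"
      using eventually_gt_at_top[of "0::real"] by eventually_elim simp
  qed
  show ?thesis unfolding isU_def
    by (intro conjI exI[of _ "\<lambda>x. exp (-(x^2)/4) * (-(x/2))"] allI lim) (use d1 d2 in auto)
qed

lemma isU_m32: "isU (-3/2) (\<lambda>x. x * exp (-(x^2)/4))"
proof -
  have d1: "((\<lambda>x. x * exp (-(x^2)/4)) has_real_derivative exp (-(x^2)/4) * (1 - x^2/2)) (at x)" for x :: real
    by (auto intro!: derivative_eq_intros simp: field_simps power2_eq_square)
  have d2: "((\<lambda>x. exp (-(x^2)/4) * (1 - x^2/2)) has_real_derivative (x^2/4 + -3/2) * (x * exp (-(x^2)/4))) (at x)" for x :: real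
    by (auto intro!: derivative_eq_intros simp: field_simps power2_eq_square)
  have lim: "((\<lambda>x::real. x * exp (-(x^2)/4) / (x powr (-(-3/2) - 1/2) * exp (-(x^2)/4))) \<longlongrightarrow> 1) at_top"
  proof (rule tendsto_eventually)
    show "\<forall>\<^sub>F x in at_top. x * exp (-(x^2)/4) / (x powr (-(-3/2) - 1/2) * exp (-(x^2)/4)) = (1::real)"
      using eventually_gt_at_top[of "0::real"] by eventually_elim simp
  qed
  show ?thesis unfolding isU_def
    by (intro conjI exI[of _ "\<lambda>x. exp (-(x^2)/4) * (1 - x^2/2)"] allI lim) (use d1 d2 in auto)
qed



lemma ratio_eq:
  fixes n x :: real
  assumes n: "n > -1/2"
  defines "k \<equiv> n + 1/2"
  shows "pcf_U n x / pcf_U (n - 1) x = VI k x / (x * VI k x + VI (k+1) x)"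
proof -
  have k: "k > 0" using n unfolding k_def by simp
  have "pcf_U n = (\<lambda>x. exp (-(x^2)/4) * VI k x / CI k)"
    using pcf_U_isU[OF isU_A[OF k]] unfolding k_def by simp
  moreover have "pcf_U (n - 1) = (\<lambda>x. exp (-(x^2)/4) * (x * VI k x + VI (k+1) x) / CI k)"
    using pcf_U_isU[OF isU_B[OF k]] unfolding k_def by (simp add: algebra_simps)
  moreover have "CI k > 0" using CI_pos k by simp
  ultimately show ?thesis by simp
qed

theorem theorem9:
  fixes n x :: real
  assumes "x \<ge> 0"
  shows "(n > 1/2 \<longrightarrow>
            2 / (x + sqrt (4*n + 2 + x^2)) < pcf_U n x / pcf_U (n - 1) x \<and>
            pcf_U n x / pcf_U (n - 1) x < 2 / (x + sqrt (4*n - 2 + x^2)))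
       \<and> (-1/2 < n \<and> n < 1/2 \<longrightarrow>
            2 / (x + sqrt (4*n + 2 + x^2)) < pcf_U n x / pcf_U (n - 1) x)
       \<and> (n = -1/2 \<longrightarrow>
            pcf_U n x / pcf_U (n - 1) x = 2 / (x + sqrt (4*n + 2 + x^2)))"
proof -
  have x: "x \<ge> 0" by fact
  have lower: "2 / (x + sqrt (4*n + 2 + x^2)) < pcf_U n x / pcf_U (n - 1) x" if n: "n > -1/2"
  proof -
    define k where "k = n + 1/2"
    have k: "k > 0" using n unfolding k_def by simp
    define V W where "V = VI k x" and "W = VI (k+1) x"
    have V: "V > 0" and W: "W > 0" unfolding V_def W_def using VI_pos k by auto
    have Z: "VI (k+2) x = k * V - x * W"
      using VI_ibp[OF k, of x] unfolding V_def W_def by linarith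
    have CS: "W^2 < V * (k * V - x * W)"
      using VI_CS[OF k, of x] unfolding Z unfolding V_def W_def .
    define s where "s = sqrt (x^2 + 4*k)"
    have s: "s \<ge> 0" "s^2 = x^2 + 4*k" unfolding s_def using k x by simp_all
    have ss: "4*n + 2 + x^2 = x^2 + 4*k" unfolding k_def by simp
    have "(x*V + 2*W)^2 < (V * s)^2"
    proof -
      have "(x*V + 2*W)^2 = x^2 * V^2 + 4 * (x*V*W + W^2)" by (simp add: power2_eq_square algebra_simps)
      also have "\<dots> < x^2 * V^2 + 4 * (k * V^2)" using CS by (simp add: power2_eq_square algebra_simps)
      also have "\<dots> = (V * s)^2" using s by (simp add: power_mult_distrib algebra_simps)
      finally show ?thesis .
    qed
    hence lt: "x*V + 2*W < V * s" by (rule power_less_imp_less_base) (use V s in simp)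
    have "s > 0" unfolding s_def using k x by (simp add: add_nonneg_pos)
    hence pos1: "x + s > 0" using x by simp
    have pos2: "x*V + W > 0" using V W x by (simp add: add_nonneg_pos)
    have "V / (x*V + W) - 2 / (x + s) = (V * (x + s) - 2 * (x*V + W)) / ((x*V + W) * (x + s))"
      using pos1 pos2 by (simp add: diff_frac_eq)
    moreover have "(V * (x + s) - 2 * (x*V + W)) / ((x*V + W) * (x + s)) > 0"
      using lt pos1 pos2 by (intro divide_pos_pos mult_pos_pos) (simp_all add: algebra_simps)
    ultimately have "2 / (x + s) < V / (x*V + W)" by linarith
    moreover have "pcf_U n x / pcf_U (n - 1) x = V / (x*V + W)"
      using ratio_eq[OF n] unfolding V_def W_def k_def .
    moreover have "sqrt (4*n + 2 + x^2) = s" unfolding s_def ss ..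
    ultimately show ?thesis by simp
  qed
  have upper: "pcf_U n x / pcf_U (n - 1) x < 2 / (x + sqrt (4*n - 2 + x^2))" if n: "n > 1/2"
  proof -
    define k where "k = n + 1/2"
    have k: "k > 0" and k1: "k - 1 > 0" using n unfolding k_def by simp_all
    define V W U where "V = VI k x" and "W = VI (k+1) x" and "U = VI (k-1) x"
    have V: "V > 0" and W: "W > 0" unfolding V_def W_def using VI_pos k by auto
    have CS: "V^2 < U * W"
      using VI_CS[OF k1, of x] unfolding V_def W_def U_def by (simp add: algebra_simps)
    have ibp: "W + x * V = (k - 1) * U"
      using VI_ibp[OF k1, of x] unfolding V_def W_def U_def by (simp add: algebra_simps)
    have key: "(k - 1) * V^2 < x*V*W + W^2"
    proof -
      have "(k - 1) * V^2 < (k - 1) * (U * W)" using CS k1 by simp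
      also have "\<dots> = (W + x * V) * W" using ibp by simp
      finally show ?thesis by (simp add: power2_eq_square algebra_simps)
    qed
    define s where "s = sqrt (x^2 + 4*(k - 1))"
    have s: "s \<ge> 0" "s^2 = x^2 + 4*(k-1)" unfolding s_def using k1 x by simp_all
    have ss: "4*n - 2 + x^2 = x^2 + 4*(k-1)" unfolding k_def by simp
    have "(V * s)^2 < (x*V + 2*W)^2"
    proof -
      have "(V * s)^2 = x^2 * V^2 + 4 * ((k - 1) * V^2)" unfolding power_mult_distrib s(2) by (simp add: algebra_simps)
      also have "\<dots> < x^2 * V^2 + 4 * (x*V*W + W^2)" using key by simp
      also have "\<dots> = (x*V + 2*W)^2" by (simp add: power2_eq_square algebra_simps)
      finally show ?thesis .
    qed
    hence lt: "V * s < x*V + 2*W" by (rule power_less_imp_less_base) (use V W x in simp)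
    have "s > 0" unfolding s_def using k1 x by (simp add: add_nonneg_pos)
    hence pos1: "x + s > 0" using x by simp
    have pos2: "x*V + W > 0" using V W x by (simp add: add_nonneg_pos)
    have "2 / (x + s) - V / (x*V + W) = (2 * (x*V + W) - V * (x + s)) / ((x + s) * (x*V + W))"
      using pos1 pos2 by (simp add: diff_frac_eq)
    moreover have "(2 * (x*V + W) - V * (x + s)) / ((x + s) * (x*V + W)) > 0"
      using lt pos1 pos2 by (intro divide_pos_pos mult_pos_pos) (simp_all add: algebra_simps)
    ultimately have "V / (x*V + W) < 2 / (x + s)" by linarith
    moreover have "pcf_U n x / pcf_U (n - 1) x = V / (x*V + W)"
      using ratio_eq[of n x] n unfolding V_def W_def k_def by simp
    moreover have "sqrt (4*n - 2 + x^2) = s" unfolding s_def ss ..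
    ultimately show ?thesis by simp
  qed
  have eq: "pcf_U n x / pcf_U (n - 1) x = 2 / (x + sqrt (4*n + 2 + x^2))" if n: "n = -1/2"
  proof -
    have 1: "pcf_U n = (\<lambda>x. exp (-(x^2)/4))" using pcf_U_isU[OF isU_m12] n by simp
    have 2: "pcf_U (n - 1) = (\<lambda>x. x * exp (-(x^2)/4))" using pcf_U_isU[OF isU_m32] n by simp
    have 3: "sqrt (4*n + 2 + x^2) = x" using n x by simp
    show ?thesis
    proof (cases "x = 0")
      case True thus ?thesis unfolding 1 2 3 by simp
    next
      case False thus ?thesis unfolding 1 2 3 by simp
    qed
  qed
  show ?thesis using lower upper eq by auto
qed

end
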